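(* Let $(\mathfrak{A},\mathfrak{A}_0)$ be a CQ*-algebra as in the context, and let $\mathfrak{A}_1$ be the completion of $\mathfrak{A}_0$ with respect to the inductive limit topology $\tau_{ind}$. Then $$\mathfrak{A}_0=\bigcup_{N\in\mathbb{N}}\mathfrak{A}_0(N)\subset\mathfrak{A}_1=\bigcup_{N\in\mathbb{N}}\overline{\mathfrak{A}_0(N)}[d_N]\subset\mathfrak{A},$$ where $\overline{\mathfrak{A}_0(N)}[d_N]$ is the completion of the metric space $(\mathfrak{A}_0(N),d_N)$ (realized as the $\|\cdot\|$-closure of $\mathfrak{A}_0(N)$ in $\mathfrak{A}$), and $\mathfrak{A}_1$, equipped with the norm $\|\cdot\|$, is a locally convex $*$-algebra: for $X,Y\in\mathfrak{A}_1$ and sequences $\{A_n\},\{B_n\}\subset\mathfrak{A}_0(N)$ (some $N$) with $\|A_n-X\|\to0$, $\|B_n-Y\|\to0$, the limit $XY:=\|\cdot\|\text{-}\lim_n A_nB_n$ exists in $\mathfrak{A}_1$ and is independent of the chosen sequences, this multiplication extends that of $\mathfrak{A}_0$, is separately $\|\cdot\|$-continuous, and $\|X^*\|=\|X\|$.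
   Context: Let $\mathfrak{A}_0$ be a unital C*-algebra with C*-norm $\|\cdot\|_0$, and $\|\cdot\|$ another norm on $\mathfrak{A}_0$ with $\|A\|\le\|A\|_0$, $\|AB\|\le\|A\|\,\|B\|_0$, $\|A^*\|=\|A\|$. $\mathfrak{A}$ is the Banach space completion of $(\mathfrak{A}_0,\|\cdot\|)$, with involution $X^*:=\lim A_n^*$ for $A_n\in\mathfrak{A}_0$, $\|A_n-X\|\to0$. For $N\in\mathbb{N}$ let $\mathfrak{A}_0(N)=\{A\in\mathfrak{A}_0:\|A\|_0\le N\}$ with metric $d_N(A,B)=\|A-B\|$. The inductive limit topology $\tau_{ind}$ on $\mathfrak{A}_0$ is defined by: $\tau_{ind}$-$\lim A_n=A$ iff $\{A_n\}\subset\mathfrak{A}_0(N)$ for some $N$ and $\|A_n-A\|\to0$. *)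

theory Defs
  imports "HOL-Analysis.Analysis"
begin

text \<open>A unital C*-algebra (with C*-norm = the library norm of the type 'b, which is a
  real Banach algebra with unit), complex scalar multiplication cs and involution st.\<close>
definition cstar_algebra ::
  "(complex \<Rightarrow> 'b::{real_normed_algebra_1,banach} \<Rightarrow> 'b) \<Rightarrow> ('b \<Rightarrow> 'b) \<Rightarrow> bool" where
  "cstar_algebra cs st \<longleftrightarrow>
     (\<forall>r x. cs (complex_of_real r) x = r *\<^sub>R x) \<and>
     (\<forall>a b x. cs (a * b) x = cs a (cs b x)) \<and>
     (\<forall>a b x. cs (a + b) x = cs a x + cs b x) \<and>
     (\<forall>a x y. cs a (x + y) = cs a x + cs a y) \<and>
     (\<forall>a x y. cs a (x * y) = cs a x * y \<and> cs a (x * y) = x * cs a y) \<and>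
     (\<forall>a x. norm (cs a x) = cmod a * norm x) \<and>
     (\<forall>x. st (st x) = x) \<and>
     (\<forall>x y. st (x + y) = st x + st y) \<and>
     (\<forall>a x. st (cs a x) = cs (cnj a) (st x)) \<and>
     (\<forall>x y. st (x * y) = st y * st x) \<and>
     (\<forall>x. norm (st x * x) = (norm x)\<^sup>2)"

text \<open>The completion of A0 w.r.t. the inductive limit topology, realized inside A:
  limits of tau_ind-Cauchy sequences (sequences in some A0(N), Cauchy for the norm of A).\<close>
definition ind_completion :: "('b::real_normed_vector \<Rightarrow> 'a::metric_space) \<Rightarrow> 'a set" where
  "ind_completion j = {X. \<exists>N::nat. \<exists>A. (\<forall>n. norm (A n) \<le> real N) \<and>
       Cauchy (\<lambda>n. j (A n)) \<and> (\<lambda>n. j (A n)) \<longlonglongrightarrow> X}"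

definition ind_prod :: "('b::real_normed_algebra \<Rightarrow> 'a::metric_space) \<Rightarrow> 'a \<Rightarrow> 'a \<Rightarrow> 'a" where
  "ind_prod j X Y = (THE Z. \<forall>N::nat. \<forall>A B.
      (\<forall>n. norm (A n) \<le> real N \<and> norm (B n) \<le> real N) \<and>
      (\<lambda>n. j (A n)) \<longlonglongrightarrow> X \<and> (\<lambda>n. j (B n)) \<longlonglongrightarrow> Y \<longrightarrow>
      (\<lambda>n. j (A n * B n)) \<longlonglongrightarrow> Z)"

definition star_ext :: "('b \<Rightarrow> 'a::metric_space) \<Rightarrow> ('b \<Rightarrow> 'b) \<Rightarrow> 'a \<Rightarrow> 'a" where
  "star_ext j st X = (THE Y. \<forall>A. (\<lambda>n. j (A n)) \<longlonglongrightarrow> X \<longrightarrow> (\<lambda>n. j (st (A n))) \<longlonglongrightarrow> Y)"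

end

theory Submission
  imports Defs
begin

lemma cauchy_bound:
  fixes f :: "nat \<Rightarrow> 'a::metric_space" and g :: "nat \<Rightarrow> 'c::metric_space" and h :: "nat \<Rightarrow> 'd::metric_space"
  assumes g: "Cauchy g" and h: "Cauchy h" and C: "C \<ge> 0" and D: "D \<ge> 0"
    and b: "\<And>n m. dist (f n) (f m) \<le> C * dist (g n) (g m) + D * dist (h n) (h m)"
  shows "Cauchy f"
proof (rule metric_CauchyI)
  fix e :: real assume e: "0 < e"
  have e1: "e / (3 * (C + 1)) > 0" "e / (3 * (D + 1)) > 0" using e C D by auto
  obtain M1 where M1: "\<forall>m\<ge>M1. \<forall>n\<ge>M1. dist (g m) (g n) < e / (3 * (C + 1))"
    using g e1(1) unfolding Cauchy_def by blast
  obtain M2 where M2: "\<forall>m\<ge>M2. \<forall>n\<ge>M2. dist (h m) (h n) < e / (3 * (D + 1))"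
    using h e1(2) unfolding Cauchy_def by blast
  show "\<exists>M. \<forall>m\<ge>M. \<forall>n\<ge>M. dist (f m) (f n) < e"
  proof (intro exI allI impI)
    fix m n assume m: "max M1 M2 \<le> m" and n: "max M1 M2 \<le> n"
    have a: "dist (g m) (g n) < e / (3 * (C + 1))" using M1 m n by auto
    have c: "dist (h m) (h n) < e / (3 * (D + 1))" using M2 m n by auto
    have "C * dist (g m) (g n) \<le> (C+1) * (e / (3 * (C + 1)))"
      using a C by (intro mult_mono) auto
    also have "\<dots> = e/3" using C by (simp add: field_simps)
    finally have 1: "C * dist (g m) (g n) \<le> e/3" .
    have "D * dist (h m) (h n) \<le> (D+1) * (e / (3 * (D + 1)))"
      using c D by (intro mult_mono) auto
    also have "\<dots> = e/3" using D by (simp add: field_simps)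
    finally have 2: "D * dist (h m) (h n) \<le> e/3" .
    show "dist (f m) (f n) < e" using b[of m n] 1 2 e by linarith
  qed
qed

lemma lim_bound:
  fixes f f' :: "nat \<Rightarrow> 'a::real_normed_vector" and g g' :: "nat \<Rightarrow> 'c::real_normed_vector"
    and h h' :: "nat \<Rightarrow> 'd::real_normed_vector"
  assumes "f \<longlonglongrightarrow> Z" "f' \<longlonglongrightarrow> Z'" "g \<longlonglongrightarrow> G" "g' \<longlonglongrightarrow> G'" "h \<longlonglongrightarrow> H" "h' \<longlonglongrightarrow> H'"
    and b: "\<And>n. norm (f n - f' n) \<le> C * norm (g n - g' n) + D * norm (h n - h' n)"
  shows "norm (Z - Z') \<le> C * norm (G - G') + D * norm (H - H')"
proof (rule tendsto_le[OF trivial_limit_sequentially])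
  show "(\<lambda>n. norm (f n - f' n)) \<longlonglongrightarrow> norm (Z - Z')" using assms by (intro tendsto_intros)
  show "(\<lambda>n. C * norm (g n - g' n) + D * norm (h n - h' n)) \<longlonglongrightarrow> C * norm (G - G') + D * norm (H - H')"
    using assms by (intro tendsto_intros)
  show "\<forall>\<^sub>F n in sequentially. norm (f n - f' n) \<le> C * norm (g n - g' n) + D * norm (h n - h' n)"
    using b by simp
qed


locale cq_ctx =
  fixes j :: "'b::{real_normed_algebra_1,banach} \<Rightarrow> 'a::banach" and st :: "'b \<Rightarrow> 'b"
  assumes lin: "linear j"
    and stst: "\<And>x. st (st x) = x"
    and stadd: "\<And>x y. st (x + y) = st x + st y"
    and stmul: "\<And>x y. st (x * y) = st y * st x"
    and stC: "\<And>x. norm (st x * x) = (norm x)\<^sup>2"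
    and le0: "\<And>a. norm (j a) \<le> norm a"
    and mult: "\<And>a b. norm (j (a * b)) \<le> norm (j a) * norm b"
    and invol: "\<And>a. norm (j (st a)) = norm (j a)"
    and dense: "closure (range j) = UNIV"
begin

lemma st_le: "norm x \<le> norm (st x)"
proof (cases "x = 0")
  case True then show ?thesis by simp
next
  case False
  have "(norm x)\<^sup>2 \<le> norm (st x) * norm x" using stC[of x] norm_mult_ineq[of "st x" x] by simp
  then show ?thesis using False by (simp add: power2_eq_square)
qed

lemma st_norm: "norm (st x) = norm x"
  using st_le[of x] st_le[of "st x"] stst[of x] by simp

lemma st_diff: "st (a - b) = st a - st b"
proof -
  have "st (a - b) + st b = st a" using stadd[of "a - b" b] by simp
  then show ?thesis by (simp add: algebra_simps eq_diff_eq)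
qed

lemma jdiff: "j (a - b) = j a - j b"
  using linear_diff[OF lin] by simp

lemma jadd: "j (a + b) = j a + j b"
  using linear_add[OF lin] by simp

lemma leftb: "norm (j (a * b)) \<le> norm a * norm (j b)"
proof -
  have "norm (j (a * b)) = norm (j (st b * st a))" using invol[of "a*b"] stmul by simp
  also have "\<dots> \<le> norm (j (st b)) * norm (st a)" by (rule mult)
  also have "\<dots> = norm a * norm (j b)" using invol st_norm by simp
  finally show ?thesis .
qed

lemma core:
  assumes "norm b \<le> M" "norm a' \<le> M'"
  shows "norm (j (a * b) - j (a' * b')) \<le> M * norm (j a - j a') + M' * norm (j b - j b')"
proof -
  have "a * b - a' * b' = (a - a') * b + a' * (b - b')" by (simp add: algebra_simps)
  then have "j (a * b) - j (a' * b') = j ((a - a') * b) + j (a' * (b - b'))"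
    by (metis jdiff jadd)
  then have "norm (j (a * b) - j (a' * b')) \<le> norm (j ((a - a') * b)) + norm (j (a' * (b - b')))"
    by (metis norm_triangle_ineq)
  also have "\<dots> \<le> norm (j (a - a')) * norm b + norm a' * norm (j (b - b'))"
    by (intro add_mono mult leftb)
  also have "\<dots> \<le> norm (j (a - a')) * M + M' * norm (j (b - b'))"
    using assms by (intro add_mono mult_left_mono mult_right_mono) auto
  finally show ?thesis by (simp add: jdiff mult.commute)
qed

lemma ex_seq:
  assumes "X \<in> ind_completion j"
  obtains N A where "\<forall>n. norm (A n) \<le> real N" "(\<lambda>n. j (A n)) \<longlonglongrightarrow> X"
  using assms unfolding ind_completion_def by blast

lemma prod_conv:
  assumes "\<forall>n. norm (A n) \<le> M'" "\<forall>n. norm (B n) \<le> M"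
    "(\<lambda>n. j (A n)) \<longlonglongrightarrow> X" "(\<lambda>n. j (B n)) \<longlonglongrightarrow> Y"
  shows "convergent (\<lambda>n. j (A n * B n))"
proof -
  have M: "M \<ge> 0" "M' \<ge> 0" using assms(1,2) by (meson norm_ge_zero order_trans)+
  have "Cauchy (\<lambda>n. j (A n * B n))"
  proof (rule cauchy_bound[OF LIMSEQ_imp_Cauchy[OF assms(3)] LIMSEQ_imp_Cauchy[OF assms(4)] M(1) M(2)])
    fix n m
    show "dist (j (A n * B n)) (j (A m * B m)) \<le> M * dist (j (A n)) (j (A m)) + M' * dist (j (B n)) (j (B m))"
      using core[of "B n" M "A m" M' "A n" "B m"] assms(1,2) by (simp add: dist_norm)
  qed
  then show ?thesis by (simp add: Cauchy_convergent_iff)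
qed

lemma prod_lip:
  assumes "\<forall>n. norm (B n) \<le> M" "\<forall>n. norm (A' n) \<le> M'"
    "(\<lambda>n. j (A n)) \<longlonglongrightarrow> X" "(\<lambda>n. j (B n)) \<longlonglongrightarrow> Y"
    "(\<lambda>n. j (A' n)) \<longlonglongrightarrow> X'" "(\<lambda>n. j (B' n)) \<longlonglongrightarrow> Y'"
    "(\<lambda>n. j (A n * B n)) \<longlonglongrightarrow> Z" "(\<lambda>n. j (A' n * B' n)) \<longlonglongrightarrow> Z'"
  shows "norm (Z - Z') \<le> M * norm (X - X') + M' * norm (Y - Y')"
  by (rule lim_bound[OF assms(7,8,3,5,4,6)]) (use core assms(1,2) in blast)

lemma ind_prod_eq:
  assumes X: "X \<in> ind_completion j" and Y: "Y \<in> ind_completion j"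
  shows "(\<forall>N::nat. \<forall>A B. (\<forall>n. norm (A n) \<le> real N \<and> norm (B n) \<le> real N) \<and>
             (\<lambda>n. j (A n)) \<longlonglongrightarrow> X \<and> (\<lambda>n. j (B n)) \<longlonglongrightarrow> Y \<longrightarrow>
             (\<lambda>n. j (A n * B n)) \<longlonglongrightarrow> ind_prod j X Y)"
    and "\<exists>N::nat. \<exists>A B. (\<forall>n. norm (A n) \<le> real N \<and> norm (B n) \<le> real N) \<and>
             (\<lambda>n. j (A n)) \<longlonglongrightarrow> X \<and> (\<lambda>n. j (B n)) \<longlonglongrightarrow> Y"
proof -
  obtain N1 A1 where A1: "\<forall>n. norm (A1 n) \<le> real N1" "(\<lambda>n. j (A1 n)) \<longlonglongrightarrow> X" using ex_seq[OF X] by blast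
  obtain N2 B1 where B1: "\<forall>n. norm (B1 n) \<le> real N2" "(\<lambda>n. j (B1 n)) \<longlonglongrightarrow> Y" using ex_seq[OF Y] by blast
  define N0 where "N0 = max N1 N2"
  have b0: "\<forall>n. norm (A1 n) \<le> real N0 \<and> norm (B1 n) \<le> real N0"
    using A1(1) B1(1) unfolding N0_def by (meson le_max_iff_disj of_nat_le_iff order_trans nat_le_linear max.cobounded1 max.cobounded2)
  show ex: "\<exists>N::nat. \<exists>A B. (\<forall>n. norm (A n) \<le> real N \<and> norm (B n) \<le> real N) \<and>
             (\<lambda>n. j (A n)) \<longlonglongrightarrow> X \<and> (\<lambda>n. j (B n)) \<longlonglongrightarrow> Y"
    using b0 A1(2) B1(2) by blast
  obtain Z where Z: "(\<lambda>n. j (A1 n * B1 n)) \<longlonglongrightarrow> Z"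
    using prod_conv[of A1 "real N0" B1 "real N0" X Y] b0 A1(2) B1(2) by (auto simp: convergent_def)
  let ?P = "\<lambda>Z. \<forall>N::nat. \<forall>A B. (\<forall>n. norm (A n) \<le> real N \<and> norm (B n) \<le> real N) \<and>
             (\<lambda>n. j (A n)) \<longlonglongrightarrow> X \<and> (\<lambda>n. j (B n)) \<longlonglongrightarrow> Y \<longrightarrow>
             (\<lambda>n. j (A n * B n)) \<longlonglongrightarrow> Z"
  have PZ: "?P Z"
  proof (intro allI impI)
    fix N :: nat and A B
    assume h: "(\<forall>n. norm (A n) \<le> real N \<and> norm (B n) \<le> real N) \<and>
             (\<lambda>n. j (A n)) \<longlonglongrightarrow> X \<and> (\<lambda>n. j (B n)) \<longlonglongrightarrow> Y"
    obtain Z' where Z': "(\<lambda>n. j (A n * B n)) \<longlonglongrightarrow> Z'"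
      using prod_conv[of A "real N" B "real N" X Y] h by (auto simp: convergent_def)
    have "norm (Z' - Z) \<le> real N * norm (X - X) + real N0 * norm (Y - Y)"
      by (rule prod_lip[of B "real N" A1 "real N0" A X Y X B1 Y]) (use h b0 A1 B1 Z Z' in auto)
    then have "Z' = Z" by simp
    then show "(\<lambda>n. j (A n * B n)) \<longlonglongrightarrow> Z" using Z' by simp
  qed
  have uniq: "Z'' = Z" if "?P Z''" for Z''
  proof -
    have "(\<lambda>n. j (A1 n * B1 n)) \<longlonglongrightarrow> Z''" using that b0 A1(2) B1(2) by blast
    then show ?thesis using Z LIMSEQ_unique by blast
  qed
  have "ind_prod j X Y = Z"
    unfolding ind_prod_def by (rule the_equality, rule PZ, erule uniq)
  then show "?P (ind_prod j X Y)" using PZ by simp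
qed

lemma star_prop:
  "\<forall>A. (\<lambda>n. j (A n)) \<longlonglongrightarrow> X \<longrightarrow> (\<lambda>n. j (st (A n))) \<longlonglongrightarrow> star_ext j st X"
proof -
  have iso: "norm (j (st a) - j (st b)) = norm (j a - j b)" for a b
    by (metis jdiff st_diff invol)
  have conv: "convergent (\<lambda>n. j (st (A n)))" if "(\<lambda>n. j (A n)) \<longlonglongrightarrow> X" for A
  proof -
    have "Cauchy (\<lambda>n. j (st (A n)))"
      by (rule cauchy_bound[OF LIMSEQ_imp_Cauchy[OF that] LIMSEQ_imp_Cauchy[OF that], of 1 0])
         (auto simp: dist_norm iso)
    then show ?thesis by (simp add: Cauchy_convergent_iff)
  qed
  have "X \<in> closure (range j)" using dense by simp
  then obtain x where x: "\<forall>n. x n \<in> range j" "x \<longlonglongrightarrow> X" unfolding closure_sequential by blast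
  then have "\<forall>n. \<exists>a. x n = j a" by blast
  then obtain A0 where A0: "\<forall>n. x n = j (A0 n)" by metis
  have A0X: "(\<lambda>n. j (A0 n)) \<longlonglongrightarrow> X" using x(2) A0 by (metis (no_types, lifting) ext)
  obtain Y where Y: "(\<lambda>n. j (st (A0 n))) \<longlonglongrightarrow> Y" using conv[OF A0X] by (auto simp: convergent_def)
  let ?P = "\<lambda>Y. \<forall>A. (\<lambda>n. j (A n)) \<longlonglongrightarrow> X \<longrightarrow> (\<lambda>n. j (st (A n))) \<longlonglongrightarrow> Y"
  have PY: "?P Y"
  proof (intro allI impI)
    fix A assume h: "(\<lambda>n. j (A n)) \<longlonglongrightarrow> X"
    obtain Y' where Y': "(\<lambda>n. j (st (A n))) \<longlonglongrightarrow> Y'" using conv[OF h] by (auto simp: convergent_def)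
    have "norm (Y' - Y) \<le> 1 * norm (X - X) + 0 * norm (X - X)"
      by (rule lim_bound[OF Y' Y h A0X h A0X]) (simp add: iso)
    then show "(\<lambda>n. j (st (A n))) \<longlonglongrightarrow> Y" using Y' by simp
  qed
  have uniq: "Y'' = Y" if "?P Y''" for Y''
    using that A0X Y LIMSEQ_unique by blast
  have "star_ext j st X = Y" unfolding star_ext_def by (rule the_equality, rule PY, erule uniq)
  then show ?thesis using PY by simp
qed

end

theorem proposition6p1:
  fixes j :: "'b::{real_normed_algebra_1,banach} \<Rightarrow> 'a::banach"
    and cs :: "complex \<Rightarrow> 'b \<Rightarrow> 'b" and st :: "'b \<Rightarrow> 'b"
  assumes cstar: "cstar_algebra cs st"
    and lin: "linear j" and inj: "inj j"
    and hom: "\<forall>c a. norm (j (cs c a)) = cmod c * norm (j a)"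
    and le0: "\<forall>a. norm (j a) \<le> norm a"
    and mult: "\<forall>a b. norm (j (a * b)) \<le> norm (j a) * norm b"
    and invol: "\<forall>a. norm (j (st a)) = norm (j a)"
    and dense: "closure (range j) = UNIV"
  shows "range j = (\<Union>N::nat. j ` {a. norm a \<le> real N})
    \<and> range j \<subseteq> ind_completion j
    \<and> ind_completion j = (\<Union>N::nat. closure (j ` {a. norm a \<le> real N}))
    \<and> (\<forall>X\<in>ind_completion j. \<forall>Y\<in>ind_completion j.
          ind_prod j X Y \<in> ind_completion j \<and>
          (\<forall>N::nat. \<forall>A B. (\<forall>n. norm (A n) \<le> real N \<and> norm (B n) \<le> real N) \<and>
             (\<lambda>n. j (A n)) \<longlonglongrightarrow> X \<and> (\<lambda>n. j (B n)) \<longlonglongrightarrow> Y \<longrightarrow>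
             (\<lambda>n. j (A n * B n)) \<longlonglongrightarrow> ind_prod j X Y))
    \<and> (\<forall>a b. ind_prod j (j a) (j b) = j (a * b))
    \<and> (\<forall>X\<in>ind_completion j.
          continuous_on (ind_completion j) (ind_prod j X) \<and>
          continuous_on (ind_completion j) (\<lambda>Y. ind_prod j Y X))
    \<and> (\<forall>X\<in>ind_completion j.
          star_ext j st X \<in> ind_completion j \<and> norm (star_ext j st X) = norm X)"
  
proof -
  have "cq_ctx j st"
    using cstar lin le0 mult invol dense unfolding cstar_algebra_def cq_ctx_def by auto
  then interpret cq_ctx j st .
  have ceil: "\<And>a::'b. norm a \<le> real (nat \<lceil>norm a\<rceil>)" by (simp add: real_nat_ceiling_ge)
  have P1: "range j = (\<Union>N::nat. j ` {a. norm a \<le> real N})"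
    using ceil by blast
  have P2: "range j \<subseteq> ind_completion j"
  proof
    fix X assume "X \<in> range j"
    then obtain a where a: "X = j a" by blast
    show "X \<in> ind_completion j" unfolding ind_completion_def
      by (rule CollectI, rule exI[of _ "nat \<lceil>norm a\<rceil>"], rule exI[of _ "\<lambda>_. a"])
         (use a ceil in \<open>auto intro: LIMSEQ_imp_Cauchy\<close>)
  qed
  have P3: "ind_completion j = (\<Union>N::nat. closure (j ` {a. norm a \<le> real N}))"
  proof
    show "ind_completion j \<subseteq> (\<Union>N::nat. closure (j ` {a. norm a \<le> real N}))"
    proof
      fix X assume "X \<in> ind_completion j"
      then obtain N A where "\<forall>n. norm (A n) \<le> real N" "(\<lambda>n. j (A n)) \<longlonglongrightarrow> X"
        unfolding ind_completion_def by blast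
      then have "X \<in> closure (j ` {a. norm a \<le> real N})"
        unfolding closure_sequential by (intro exI[of _ "\<lambda>n. j (A n)"]) auto
      then show "X \<in> (\<Union>N::nat. closure (j ` {a. norm a \<le> real N}))" by blast
    qed
    show "(\<Union>N::nat. closure (j ` {a. norm a \<le> real N})) \<subseteq> ind_completion j"
    proof
      fix X assume "X \<in> (\<Union>N::nat. closure (j ` {a. norm a \<le> real N}))"
      then obtain N :: nat where "X \<in> closure (j ` {a. norm a \<le> real N})" by blast
      then obtain x where x: "\<forall>n. x n \<in> j ` {a. norm a \<le> real N}" "x \<longlonglongrightarrow> X"
        unfolding closure_sequential by blast
      then have "\<forall>n. \<exists>a. norm a \<le> real N \<and> x n = j a" by blast
      then obtain A where A: "\<forall>n. norm (A n) \<le> real N \<and> x n = j (A n)" by metis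
      have "(\<lambda>n. j (A n)) \<longlonglongrightarrow> X" using x(2) A by (metis (no_types, lifting) ext)
      then show "X \<in> ind_completion j" unfolding ind_completion_def
        using A LIMSEQ_imp_Cauchy by blast
    qed
  qed
  have P4: "\<forall>X\<in>ind_completion j. \<forall>Y\<in>ind_completion j.
          ind_prod j X Y \<in> ind_completion j \<and>
          (\<forall>N::nat. \<forall>A B. (\<forall>n. norm (A n) \<le> real N \<and> norm (B n) \<le> real N) \<and>
             (\<lambda>n. j (A n)) \<longlonglongrightarrow> X \<and> (\<lambda>n. j (B n)) \<longlonglongrightarrow> Y \<longrightarrow>
             (\<lambda>n. j (A n * B n)) \<longlonglongrightarrow> ind_prod j X Y)"
  proof (intro ballI conjI)
    fix X Y assume X: "X \<in> ind_completion j" and Y: "Y \<in> ind_completion j"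
    show "\<forall>N::nat. \<forall>A B. (\<forall>n. norm (A n) \<le> real N \<and> norm (B n) \<le> real N) \<and>
             (\<lambda>n. j (A n)) \<longlonglongrightarrow> X \<and> (\<lambda>n. j (B n)) \<longlonglongrightarrow> Y \<longrightarrow>
             (\<lambda>n. j (A n * B n)) \<longlonglongrightarrow> ind_prod j X Y" by (rule ind_prod_eq(1)[OF X Y])
    obtain N A B where h: "\<forall>n. norm (A n) \<le> real N \<and> norm (B n) \<le> real N"
      "(\<lambda>n. j (A n)) \<longlonglongrightarrow> X" "(\<lambda>n. j (B n)) \<longlonglongrightarrow> Y"
      using ind_prod_eq(2)[OF X Y] by blast
    have lim: "(\<lambda>n. j (A n * B n)) \<longlonglongrightarrow> ind_prod j X Y" using ind_prod_eq(1)[OF X Y] h by blast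
    have bd: "norm (A n * B n) \<le> real (N * N)" for n
    proof -
      have "norm (A n * B n) \<le> norm (A n) * norm (B n)" by (rule norm_mult_ineq)
      also have "\<dots> \<le> real N * real N" using h(1) by (intro mult_mono) auto
      finally show ?thesis by simp
    qed
    show "ind_prod j X Y \<in> ind_completion j" unfolding ind_completion_def
      by (intro CollectI exI[of _ "N*N"] exI[of _ "\<lambda>n. A n * B n"]) (use bd lim LIMSEQ_imp_Cauchy[OF lim] in auto)
  qed
  have P5: "\<forall>a b. ind_prod j (j a) (j b) = j (a * b)"
  proof (intro allI)
    fix a b
    have ja: "j a \<in> ind_completion j" "j b \<in> ind_completion j" using P2 by auto
    define N where "N = max (nat \<lceil>norm a\<rceil>) (nat \<lceil>norm b\<rceil>)"
    have "norm a \<le> real N" "norm b \<le> real N" unfolding N_def using ceil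
      by (meson max.cobounded1 max.cobounded2 of_nat_le_iff order_trans)+
    then have "(\<lambda>n. j (a * b)) \<longlonglongrightarrow> ind_prod j (j a) (j b)"
    proof -
      have "\<forall>n. norm ((\<lambda>_. a) n) \<le> real N \<and> norm ((\<lambda>_. b) n) \<le> real N"
        using \<open>norm a \<le> real N\<close> \<open>norm b \<le> real N\<close> by simp
      then show ?thesis using spec[OF spec[OF spec[OF ind_prod_eq(1)[OF ja], of N], of "\<lambda>_. a"], of "\<lambda>_. b"]
        by simp
    qed
    then show "ind_prod j (j a) (j b) = j (a * b)" using LIMSEQ_unique tendsto_const by blast
  qed
  have P6: "\<forall>X\<in>ind_completion j.
          continuous_on (ind_completion j) (ind_prod j X) \<and>
          continuous_on (ind_completion j) (\<lambda>Y. ind_prod j Y X)"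
  proof (intro ballI conjI)
    fix X assume X: "X \<in> ind_completion j"
    obtain N A where A: "\<forall>n. norm (A n) \<le> real N" "(\<lambda>n. j (A n)) \<longlonglongrightarrow> X" using ex_seq[OF X] by blast
    have gen: "\<exists>N'. \<exists>B. (\<forall>n. norm (A n) \<le> real N' \<and> norm (B n) \<le> real N') \<and>
         (\<lambda>n. j (B n)) \<longlonglongrightarrow> Y" if Y: "Y \<in> ind_completion j" for Y
    proof -
      obtain M B where B: "\<forall>n. norm (B n) \<le> real M" "(\<lambda>n. j (B n)) \<longlonglongrightarrow> Y" using ex_seq[OF Y] by blast
      have "\<forall>n. norm (A n) \<le> real (max N M) \<and> norm (B n) \<le> real (max N M)"
        using A(1) B(1) by (meson max.cobounded1 max.cobounded2 of_nat_le_iff order_trans)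
      then show ?thesis using B(2) by blast
    qed
    have N0: "0 \<le> real N" by simp
    show "continuous_on (ind_completion j) (ind_prod j X)"
    proof (rule lipschitz_on_continuous_on, rule lipschitz_onI[OF _ N0])
      fix Y Y' assume Y: "Y \<in> ind_completion j" and Y': "Y' \<in> ind_completion j"
      obtain M B where B: "\<forall>n. norm (A n) \<le> real M \<and> norm (B n) \<le> real M" "(\<lambda>n. j (B n)) \<longlonglongrightarrow> Y"
        using gen[OF Y] by blast
      obtain M' B' where B': "\<forall>n. norm (A n) \<le> real M' \<and> norm (B' n) \<le> real M'" "(\<lambda>n. j (B' n)) \<longlonglongrightarrow> Y'"
        using gen[OF Y'] by blast
      have l1: "(\<lambda>n. j (A n * B n)) \<longlonglongrightarrow> ind_prod j X Y" using ind_prod_eq(1)[OF X Y] B A(2) by blast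
      have l2: "(\<lambda>n. j (A n * B' n)) \<longlonglongrightarrow> ind_prod j X Y'" using ind_prod_eq(1)[OF X Y'] B' A(2) by blast
      have "norm (ind_prod j X Y - ind_prod j X Y') \<le> real M * norm (X - X) + real N * norm (Y - Y')"
        by (rule prod_lip[OF _ _ A(2) B(2) A(2) B'(2) l1 l2]) (use B A in auto)
      then show "dist (ind_prod j X Y) (ind_prod j X Y') \<le> real N * dist Y Y'" by (simp add: dist_norm)
    qed
    show "continuous_on (ind_completion j) (\<lambda>Y. ind_prod j Y X)"
    proof (rule lipschitz_on_continuous_on, rule lipschitz_onI[OF _ N0])
      fix Y Y' assume Y: "Y \<in> ind_completion j" and Y': "Y' \<in> ind_completion j"
      obtain M B where B: "\<forall>n. norm (A n) \<le> real M \<and> norm (B n) \<le> real M" "(\<lambda>n. j (B n)) \<longlonglongrightarrow> Y"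
        using gen[OF Y] by blast
      obtain M' B' where B': "\<forall>n. norm (A n) \<le> real M' \<and> norm (B' n) \<le> real M'" "(\<lambda>n. j (B' n)) \<longlonglongrightarrow> Y'"
        using gen[OF Y'] by blast
      have l1: "(\<lambda>n. j (B n * A n)) \<longlonglongrightarrow> ind_prod j Y X" using ind_prod_eq(1)[OF Y X] B A(2) by blast
      have l2: "(\<lambda>n. j (B' n * A n)) \<longlonglongrightarrow> ind_prod j Y' X" using ind_prod_eq(1)[OF Y' X] B' A(2) by blast
      have "norm (ind_prod j Y X - ind_prod j Y' X) \<le> real N * norm (Y - Y') + real M' * norm (X - X)"
        by (rule prod_lip[OF _ _ B(2) A(2) B'(2) A(2) l1 l2]) (use B' A in auto)
      then show "dist (ind_prod j Y X) (ind_prod j Y' X) \<le> real N * dist Y Y'" by (simp add: dist_norm)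
    qed
  qed
  have P7: "\<forall>X\<in>ind_completion j.
          star_ext j st X \<in> ind_completion j \<and> norm (star_ext j st X) = norm X"
  proof (intro ballI conjI)
    fix X assume X: "X \<in> ind_completion j"
    obtain N A where A: "\<forall>n. norm (A n) \<le> real N" "(\<lambda>n. j (A n)) \<longlonglongrightarrow> X" using ex_seq[OF X] by blast
    have S: "(\<lambda>n. j (st (A n))) \<longlonglongrightarrow> star_ext j st X" using star_prop A(2) by blast
    have "\<forall>n. norm (st (A n)) \<le> real N" using A(1) st_norm by simp
    then show "star_ext j st X \<in> ind_completion j" unfolding ind_completion_def
      by (intro CollectI exI[of _ N] exI[of _ "\<lambda>n. st (A n)"]) (use S LIMSEQ_imp_Cauchy[OF S] \<open>\<forall>n. norm (st (A n)) \<le> real N\<close> in auto)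
    have "(\<lambda>n. norm (j (st (A n)))) \<longlonglongrightarrow> norm (star_ext j st X)" using S by (rule tendsto_norm)
    moreover have "(\<lambda>n. norm (j (st (A n)))) \<longlonglongrightarrow> norm X" using tendsto_norm[OF A(2)] invol by simp
    ultimately show "norm (star_ext j st X) = norm X" using LIMSEQ_unique by blast
  qed
  show ?thesis using P1 P2 P3 P4 P5 P6 P7 by blast
qed

end
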